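(* Let $\overleftarrow\sigma=(\sigma_n:\mathcal A_{n+1}^*\to\mathcal A_n^* )_{n\ge0}$ be an everywhere growing directive sequence and $\overleftarrow v=(\vec v_n)_{n\ge0}$ a vector tower over $\overleftarrow\sigma$. For each $k\ge0$ let $\mu_k=\mathfrak m_k(\overleftarrow v\dagger_k)\in\mathcal M(X_k)$. Then $\sigma_k^{\mathcal M}(\mu_{k+1})=\mu_k$ for all $k\ge0$, i.e. $(\mu_k)_{k\ge0}$ is a measure tower on $\overleftarrow\sigma$.
   Context: Directive sequence: non-erasing monoid morphisms $\sigma_n:\mathcal A_{n+1}^*\to\mathcal A_n^*$ over finite alphabets; $\sigma_{[n,m)}=\sigma_n\circ\cdots\circ\sigma_{m-1}$; everywhere growing means $\min_{a\in\mathcal A_n}|\sigma_{[0,n)}(a)|\to\infty$. The truncated sequence $\overleftarrow\sigma\dagger_k=(\sigma_n)_{n\ge k}$; the level subshift $X_k\subseteq\mathcal A_k^{\mathbb Z}$ is the subshift generated by $\overleftarrow\sigma\dagger_k$, i.e. all $\mathbf x$ whose finite factors are factors of some $\sigma_{[k,n)}(a)$, $n>k$, $a\in\mathcal A_n$. $M(\sigma)=(|\sigma(a)|_b)_{b,a}$ is the incidence matrix. A vector tower is $(\vec v_n)$, $\vec v_n\in\mathbb R_{\ge0}^{\mathcal A_n}$, with $\vec v_n=M(\sigma_n)\vec v_{n+1}$; its truncation is $\overleftarrow v\dagger_k=(\vec v_n)_{n\ge k}$, a vector tower over $\overleftarrow\sigma\dagger_k$. The evaluation $\mathfrak m_k(\overleftarrow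 v\dagger_k)$ is the invariant measure $\mu$ on $X_k$ with $\mu([w])=\lim_{n\to\infty}\sum_{a\in\mathcal A_n}\vec v_n(a)|\sigma_{[k,n)}(a)|_w$ for $w\in\mathcal A_k^*$ ($|u|_w$ = number of possibly overlapping occurrences; $[w]=\{\mathbf x:\mathbf x_{[1,|w|]}=w\}$). $\mathcal M(Y)$ = finite shift-invariant Borel measures supported in $Y$. A measure tower on $\overleftarrow\sigma$ is a sequence $\mu_n\in\mathcal M(\mathcal A_n^{\mathbb Z})$ with $\mu_n=\sigma_n^{\mathcal M}(\mu_{n+1})$ for all $n$. Measure transfer for non-erasing $\sigma:\mathcal A^*\to\mathcal B^*$: with $\mathcal A_\sigma=\{a(k):1\le k\le|\sigma(a)|\}$, $\pi_\sigma(a)=a(1)\cdots a(|\sigma(a)|)$, $\alpha_\sigma(a(k))=$ $k$-th letter of $\sigma(a)$, and $\widehat w$ the shortest word in $\mathcal A^*$ whose $\pi_\sigma$-image contains $w\in\mathcal A_\sigma^*$ (with $\mu([\widehat w]):=0$ if none), $\sigma^{\mathcal M}(\mu)([w'])=\sum_{\alpha_\sigma(w)=w'}\mu([\widehat w])$. *)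

theory Defs
  imports Complex_Main
begin

text \<open>Words are lists. A directive sequence is given by alphabets A n (sets of letters
  of a common type) and letter images sig n :: 'a \<Rightarrow> 'a list, sig n a \<in> (A n)^* for a \<in> A (n+1).\<close>

definition subst :: "('a \<Rightarrow> 'a list) \<Rightarrow> 'a list \<Rightarrow> 'a list" where
  "subst s w = concat (map s w)"

text \<open>sig_range sig k m = sigma_[k,k+m) = sigma_k o ... o sigma_(k+m-1).\<close>
fun sig_range :: "(nat \<Rightarrow> 'a \<Rightarrow> 'a list) \<Rightarrow> nat \<Rightarrow> nat \<Rightarrow> 'a list \<Rightarrow> 'a list" where
  "sig_range sig k 0 w = w"
| "sig_range sig k (Suc m) w = subst (sig k) (sig_range sig (Suc k) m w)"

definition directive_seq :: "(nat \<Rightarrow> 'a set) \<Rightarrow> (nat \<Rightarrow> 'a \<Rightarrow> 'a list) \<Rightarrow> bool" where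
  "directive_seq A sig \<longleftrightarrow> (\<forall>n. finite (A n) \<and> A n \<noteq> {} \<and>
      (\<forall>a \<in> A (Suc n). sig n a \<noteq> [] \<and> set (sig n a) \<subseteq> A n))"

definition everywhere_growing :: "(nat \<Rightarrow> 'a set) \<Rightarrow> (nat \<Rightarrow> 'a \<Rightarrow> 'a list) \<Rightarrow> bool" where
  "everywhere_growing A sig \<longleftrightarrow>
     filterlim (\<lambda>n. Min ((\<lambda>a. length (sig_range sig 0 n [a])) ` A n)) at_top sequentially"

definition occ :: "'a list \<Rightarrow> 'a list \<Rightarrow> nat" where
  "occ u w = card {i. i + length w \<le> length u \<and> take (length w) (drop i u) = w}"

definition vector_tower :: "(nat \<Rightarrow> 'a set) \<Rightarrow> (nat \<Rightarrow> 'a \<Rightarrow> 'a list) \<Rightarrow> (nat \<Rightarrow> 'a \<Rightarrow> real) \<Rightarrow> bool" where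
  "vector_tower A sig v \<longleftrightarrow> (\<forall>n. (\<forall>b \<in> A n. v n b \<ge> 0) \<and>
      (\<forall>b \<in> A n. v n b = (\<Sum>a \<in> A (Suc n). real (count_list (sig n a) b) * v (Suc n) a)))"

text \<open>A shift-invariant measure on A^Z is represented by its values on cylinders [w], w nonempty.
  Evaluation m_k of the truncated tower: mu([w]) = lim_n sum_a v_n(a) |sigma_[k,n)(a)|_w.\<close>
definition eval_tower :: "(nat \<Rightarrow> 'a set) \<Rightarrow> (nat \<Rightarrow> 'a \<Rightarrow> 'a list) \<Rightarrow> (nat \<Rightarrow> 'a \<Rightarrow> real)
    \<Rightarrow> nat \<Rightarrow> 'a list \<Rightarrow> real" where
  "eval_tower A sig v k w =
     lim (\<lambda>m. \<Sum>a \<in> A (k + m). v (k + m) a * real (occ (sig_range sig k m [a]) w))"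

text \<open>Measure transfer. Letters of A_sigma are pairs (a,i), 1 \<le> i \<le> |sigma(a)|.\<close>
definition sub_alph :: "'a set \<Rightarrow> ('a \<Rightarrow> 'b list) \<Rightarrow> ('a \<times> nat) set" where
  "sub_alph A s = {(a, i). a \<in> A \<and> 1 \<le> i \<and> i \<le> length (s a)}"

definition pi_sig :: "('a \<Rightarrow> 'b list) \<Rightarrow> 'a list \<Rightarrow> ('a \<times> nat) list" where
  "pi_sig s u = concat (map (\<lambda>a. map (\<lambda>i. (a, i)) [1..<Suc (length (s a))]) u)"

definition alpha_sig :: "('a \<Rightarrow> 'b list) \<Rightarrow> 'a \<times> nat \<Rightarrow> 'b" where
  "alpha_sig s p = s (fst p) ! (snd p - 1)"

definition is_factor :: "'c list \<Rightarrow> 'c list \<Rightarrow> bool" where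
  "is_factor w u \<longleftrightarrow> (\<exists>p q. u = p @ w @ q)"

definition hat :: "'a set \<Rightarrow> ('a \<Rightarrow> 'b list) \<Rightarrow> ('a \<times> nat) list \<Rightarrow> 'a list" where
  "hat A s w = (THE u. u \<in> lists A \<and> is_factor w (pi_sig s u) \<and>
      (\<forall>u' \<in> lists A. is_factor w (pi_sig s u') \<longrightarrow> length u \<le> length u'))"

definition hat_val :: "'a set \<Rightarrow> ('a \<Rightarrow> 'b list) \<Rightarrow> ('a list \<Rightarrow> real) \<Rightarrow> ('a \<times> nat) list \<Rightarrow> real" where
  "hat_val A s mu w = (if \<exists>u \<in> lists A. is_factor w (pi_sig s u) then mu (hat A s w) else 0)"

definition measure_transfer :: "'a set \<Rightarrow> ('a \<Rightarrow> 'b list) \<Rightarrow> ('a list \<Rightarrow> real) \<Rightarrow> 'b list \<Rightarrow> real" where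
  "measure_transfer A s mu w' =
     (\<Sum>w \<in> {w. w \<in> lists (sub_alph A s) \<and> map (alpha_sig s) w = w'}. hat_val A s mu w)"

end

theory Submission
  imports Defs
begin

lemma occ_set_finite: "finite {i. i + length w \<le> length u \<and> P i}"
  by (rule finite_subset[of _ "{..length u}"]) auto

lemma occ_le: assumes "w \<noteq> []" shows "occ u w \<le> length u"
proof -
  have "length w > 0" using assms by simp
  have "card {i. i + length w \<le> length u \<and> take (length w) (drop i u) = w} \<le> card {..<length u}"
  proof (rule card_mono)
    show "{i. i + length w \<le> length u \<and> take (length w) (drop i u) = w} \<subseteq> {..<length u}"
    proof
      fix i assume "i \<in> {i. i + length w \<le> length u \<and> take (length w) (drop i u) = w}"
      then have "i + length w \<le> length u" by simp
      then have "i < length u" using \<open>length w > 0\<close> by linarith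
      then show "i \<in> {..<length u}" by simp
    qed
  qed simp
  then show ?thesis unfolding occ_def by simp
qed

lemma occ_append:
  "occ (p @ q) w = card {i. i < length p \<and> i + length w \<le> length (p@q) \<and> take (length w) (drop i (p@q)) = w} + occ q w"
proof -
  let ?X = "{i. i + length w \<le> length (p@q) \<and> take (length w) (drop i (p@q)) = w}"
  let ?X1 = "{i. i < length p \<and> i + length w \<le> length (p@q) \<and> take (length w) (drop i (p@q)) = w}"
  let ?Q = "{i. i + length w \<le> length q \<and> take (length w) (drop i q) = w}"
  have X2: "{i\<in>?X. \<not> i < length p} = (\<lambda>i. i + length p) ` ?Q"
  proof (rule set_eqI, rule iffI)
    fix i assume "i \<in> {i\<in>?X. \<not> i < length p}"
    then show "i \<in> (\<lambda>i. i + length p) ` ?Q"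
      by (intro image_eqI[of _ _ "i - length p"]) auto
  qed auto
  have "card ?X = card (?X1 \<union> {i\<in>?X. \<not> i < length p})" by (rule arg_cong[where f=card]) auto
  also have "\<dots> = card ?X1 + card {i\<in>?X. \<not> i < length p}"
  proof (rule card_Un_disjoint)
    show "finite ?X1" by (rule finite_subset[of _ "{..<length p}"]) auto
    show "finite {i\<in>?X. \<not> i < length p}" by (rule finite_subset[of _ "{..length (p@q)}"]) auto
  qed auto
  also have "card {i\<in>?X. \<not> i < length p} = card ?Q"
    unfolding X2 by (rule card_image) (simp add: inj_on_def)
  finally show ?thesis unfolding occ_def .
qed

lemma occ_pos_iff: "0 < occ u w \<longleftrightarrow> is_factor w u"
proof
  assume "0 < occ u w"
  then obtain i where i: "i + length w \<le> length u" "take (length w) (drop i u) = w"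
    unfolding occ_def card_gt_0_iff by auto
  have "u = take i u @ take (length w) (drop i u) @ drop (length w) (drop i u)" by (metis append_take_drop_id)
  then show "is_factor w u" unfolding is_factor_def using i by metis
next
  assume "is_factor w u"
  then obtain p q where u: "u = p @ w @ q" unfolding is_factor_def by blast
  have "length p \<in> {i. i + length w \<le> length u \<and> take (length w) (drop i u) = w}"
    using u by simp
  then show "0 < occ u w" unfolding occ_def
    by (metis card_gt_0_iff empty_iff occ_set_finite)
qed

lemma occ_Nil: "w \<noteq> [] \<Longrightarrow> occ [] w = 0"
  unfolding occ_def by simp

lemma occ_concat_ge: "w \<noteq> [] \<Longrightarrow> sum_list (map (\<lambda>u. occ u w) us) \<le> occ (concat us) w"
proof (induction us)
  case Nil then show ?case by (simp add: occ_Nil)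
next
  case (Cons u us)
  have lw: "length w > 0" using Cons.prems by simp
  have "occ u w \<le> card {i. i < length u \<and> i + length w \<le> length (u @ concat us) \<and>
      take (length w) (drop i (u @ concat us)) = w}"
    unfolding occ_def
  proof (rule card_mono)
    show "finite {i. i < length u \<and> i + length w \<le> length (u @ concat us) \<and>
      take (length w) (drop i (u @ concat us)) = w}" by (rule finite_subset[of _ "{..<length u}"]) auto
  next
    show "{i. i + length w \<le> length u \<and> take (length w) (drop i u) = w}
      \<subseteq> {i. i < length u \<and> i + length w \<le> length (u @ concat us) \<and> take (length w) (drop i (u @ concat us)) = w}"
    proof (rule subsetI)
      fix i assume "i \<in> {i. i + length w \<le> length u \<and> take (length w) (drop i u) = w}"
      then have i: "i + length w \<le> length u" "take (length w) (drop i u) = w" by auto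
      have "i < length u" using i(1) lw by linarith
      then show "i \<in> {i. i < length u \<and> i + length w \<le> length (u @ concat us) \<and> take (length w) (drop i (u @ concat us)) = w}"
        using i by simp
    qed
  qed
  then show ?case using Cons by (simp add: occ_append)
qed

lemma subst_Nil[simp]: "subst s [] = []" by (simp add: subst_def)
lemma subst_Cons[simp]: "subst s (a # w) = s a @ subst s w" by (simp add: subst_def)
lemma subst_append[simp]: "subst s (u @ w) = subst s u @ subst s w" by (simp add: subst_def)
lemma subst_concat: "subst s (concat xs) = concat (map (subst s) xs)"
  by (induction xs) auto

lemma sig_range_hom: "sig_range sig k m w = concat (map (\<lambda>b. sig_range sig k m [b]) w)"
proof (induction m arbitrary: k w)
  case 0 then show ?case by (induction w) auto
next
  case (Suc m)
  show ?case
    apply (simp only: sig_range.simps)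
    apply (subst Suc[of "Suc k"])
    apply (simp add: subst_concat comp_def)
    done
qed

lemma sig_range_Suc': "sig_range sig k (Suc m) w = sig_range sig k m (subst (sig (k+m)) w)"
proof (induction m arbitrary: k)
  case 0 then show ?case by simp
next
  case (Suc m)
  have "sig_range sig k (Suc (Suc m)) w = subst (sig k) (sig_range sig (Suc k) (Suc m) w)" by simp
  also have "\<dots> = subst (sig k) (sig_range sig (Suc k) m (subst (sig (Suc k + m)) w))" using Suc by simp
  finally show ?case by simp
qed

lemma subst_lists: assumes "set w \<subseteq> A'" "\<forall>a\<in>A'. set (s a) \<subseteq> B" shows "set (subst s w) \<subseteq> B"
proof -
  have "set (subst s w) = (\<Union>a\<in>set w. set (s a))" by (induction w) auto
  then show ?thesis using assms by blast
qed

lemma sig_range_lists: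
  assumes "directive_seq A sig"
  shows "set w \<subseteq> A (k+m) \<Longrightarrow> set (sig_range sig k m w) \<subseteq> A k"
proof (induction m arbitrary: k w)
  case 0 then show ?case by simp
next
  case (Suc m)
  have "set (sig_range sig (Suc k) m w) \<subseteq> A (Suc k)" using Suc by simp
  moreover have "\<forall>a\<in>A (Suc k). set (sig k a) \<subseteq> A k" using assms unfolding directive_seq_def by blast
  ultimately show ?case by (simp only: sig_range.simps) (rule subst_lists)
qed

lemma tower_step:
  assumes "directive_seq A sig" "vector_tower A sig v"
  shows "(\<Sum>a\<in>A (Suc n). v (Suc n) a * real (sum_list (map g (sig n a)))) = (\<Sum>b\<in>A n. v n b * real (g b))"
proof -
  have fin: "finite (A n)" "finite (A (Suc n))" using assms(1) unfolding directive_seq_def by auto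
  have "(\<Sum>a\<in>A (Suc n). v (Suc n) a * real (sum_list (map g (sig n a))))
      = (\<Sum>a\<in>A (Suc n). v (Suc n) a * (\<Sum>b\<in>A n. real (count_list (sig n a) b) * real (g b)))"
  proof (rule sum.cong[OF refl])
    fix a assume "a \<in> A (Suc n)"
    then have "set (sig n a) \<subseteq> A n" using assms(1) unfolding directive_seq_def by auto
    then show "v (Suc n) a * real (sum_list (map g (sig n a))) =
        v (Suc n) a * (\<Sum>b\<in>A n. real (count_list (sig n a) b) * real (g b))"
      using sum_list_map_eq_sum_count2[of "sig n a" "A n" g] fin by simp
  qed
  also have "\<dots> = (\<Sum>b\<in>A n. real (g b) * (\<Sum>a\<in>A (Suc n). real (count_list (sig n a) b) * v (Suc n) a))"
    apply (simp only: sum_distrib_left)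
    apply (subst sum.swap)
    apply (simp add: mult_ac)
    done
  also have "\<dots> = (\<Sum>b\<in>A n. v n b * real (g b))"
    using assms(2) unfolding vector_tower_def by (intro sum.cong) auto
  finally show ?thesis .
qed


definition Ssum :: "(nat \<Rightarrow> 'a set) \<Rightarrow> (nat \<Rightarrow> 'a \<Rightarrow> 'a list) \<Rightarrow> (nat \<Rightarrow> 'a \<Rightarrow> real) \<Rightarrow> nat \<Rightarrow> 'a list \<Rightarrow> nat \<Rightarrow> real" where
  "Ssum A sig v k w m = (\<Sum>a \<in> A (k + m). v (k + m) a * real (occ (sig_range sig k m [a]) w))"

lemma eval_tower_Ssum: "eval_tower A sig v k w = lim (Ssum A sig v k w)"
  by (simp add: eval_tower_def Ssum_def[abs_def])

lemma sig_range_Suc_single: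
  "sig_range sig k (Suc m) [a] = concat (map (\<lambda>b. sig_range sig k m [b]) (sig (k+m) a))"
  by (simp only: sig_range_Suc') (simp add: sig_range_hom[of sig k m "sig (k+m) a"])

lemma Ssum_mono:
  assumes ds: "directive_seq A sig" and vt: "vector_tower A sig v" and w: "w \<noteq> []"
  shows "Ssum A sig v k w m \<le> Ssum A sig v k w (Suc m)"
proof -
  let ?F = "\<lambda>b. sig_range sig k m [b]"
  have "Ssum A sig v k w m = (\<Sum>a\<in>A (Suc (k+m)). v (Suc (k+m)) a * real (sum_list (map (\<lambda>b. occ (?F b) w) (sig (k+m) a))))"
    unfolding Ssum_def by (rule tower_step[OF ds vt, symmetric])
  also have "\<dots> \<le> (\<Sum>a\<in>A (Suc (k+m)). v (Suc (k+m)) a * real (occ (concat (map ?F (sig (k+m) a))) w))"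
  proof (rule sum_mono)
    fix a assume "a \<in> A (Suc (k+m))"
    have "v (Suc (k+m)) a \<ge> 0" using vt \<open>a \<in> A (Suc (k+m))\<close> unfolding vector_tower_def by blast
    moreover have "sum_list (map (\<lambda>b. occ (?F b) w) (sig (k+m) a)) \<le> occ (concat (map ?F (sig (k+m) a))) w"
      using occ_concat_ge[OF w, of "map ?F (sig (k+m) a)"] by (simp add: comp_def)
    ultimately show "v (Suc (k+m)) a * real (sum_list (map (\<lambda>b. occ (?F b) w) (sig (k+m) a)))
        \<le> v (Suc (k+m)) a * real (occ (concat (map ?F (sig (k+m) a))) w)"
      by (intro mult_left_mono) auto
  qed
  also have "\<dots> = Ssum A sig v k w (Suc m)"
    unfolding Ssum_def by (simp only: add_Suc_right sig_range_Suc_single)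
  finally show ?thesis .
qed

lemma Tsum_const:
  assumes ds: "directive_seq A sig" and vt: "vector_tower A sig v"
  shows "(\<Sum>a \<in> A (k + m). v (k + m) a * real (length (sig_range sig k m [a]))) = (\<Sum>a \<in> A k. v k a)"
proof (induction m)
  case 0 then show ?case by simp
next
  case (Suc m)
  let ?F = "\<lambda>b. sig_range sig k m [b]"
  have "(\<Sum>a \<in> A (k + Suc m). v (k + Suc m) a * real (length (sig_range sig k (Suc m) [a])))
     = (\<Sum>a\<in>A (Suc (k+m)). v (Suc (k+m)) a * real (sum_list (map (\<lambda>b. length (?F b)) (sig (k+m) a))))"
    by (simp only: add_Suc_right sig_range_Suc_single length_concat map_map comp_def)
  also have "\<dots> = (\<Sum>a \<in> A (k + m). v (k + m) a * real (length (sig_range sig k m [a])))"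
    by (rule tower_step[OF ds vt])
  finally show ?case using Suc by simp
qed

lemma Ssum_bound:
  assumes ds: "directive_seq A sig" and vt: "vector_tower A sig v" and w: "w \<noteq> []"
  shows "Ssum A sig v k w m \<le> (\<Sum>a \<in> A k. v k a)"
proof -
  have "Ssum A sig v k w m \<le> (\<Sum>a \<in> A (k + m). v (k + m) a * real (length (sig_range sig k m [a])))"
    unfolding Ssum_def
  proof (rule sum_mono)
    fix a assume "a \<in> A (k+m)"
    have "v (k+m) a \<ge> 0" using vt \<open>a \<in> A (k+m)\<close> unfolding vector_tower_def by blast
    then show "v (k + m) a * real (occ (sig_range sig k m [a]) w) \<le> v (k + m) a * real (length (sig_range sig k m [a]))"
      using occ_le[OF w] by (intro mult_left_mono) auto
  qed
  then show ?thesis using Tsum_const[OF ds vt] by simp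
qed

lemma Ssum_conv:
  assumes ds: "directive_seq A sig" and vt: "vector_tower A sig v" and w: "w \<noteq> []"
  shows "Ssum A sig v k w \<longlonglongrightarrow> lim (Ssum A sig v k w)"
proof -
  have "incseq (Ssum A sig v k w)" by (rule incseq_SucI) (rule Ssum_mono[OF ds vt w])
  moreover have "bdd_above (range (Ssum A sig v k w))"
    by (rule bdd_aboveI[of _ "\<Sum>a \<in> A k. v k a"]) (auto intro: Ssum_bound[OF ds vt w])
  ultimately have "convergent (Ssum A sig v k w)"
    using LIMSEQ_incseq_SUP convergent_def by blast
  then show ?thesis by (simp add: convergent_LIMSEQ_iff)
qed


declare upt_Suc[simp del]

abbreviation blk :: "('a \<Rightarrow> 'b list) \<Rightarrow> 'a \<Rightarrow> ('a \<times> nat) list" where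
  "blk s a \<equiv> map (\<lambda>i. (a, i)) [1..<Suc (length (s a))]"

lemma pi_Nil[simp]: "pi_sig s [] = []" by (simp add: pi_sig_def)
lemma pi_Cons[simp]: "pi_sig s (a # u) = blk s a @ pi_sig s u" by (simp add: pi_sig_def)
lemma pi_append[simp]: "pi_sig s (u @ u') = pi_sig s u @ pi_sig s u'" by (simp add: pi_sig_def)

lemma blk_nth: "t < length (s a) \<Longrightarrow> blk s a ! t = (a, Suc t)"
  by simp

lemma pi_nth_snd:
  assumes "\<forall>a\<in>set y. s a \<noteq> []" "t < length (pi_sig s y)"
  shows "snd (pi_sig s y ! t) \<le> Suc t \<and> (snd (pi_sig s y ! t) = Suc t \<longrightarrow>
     y \<noteq> [] \<and> t < length (s (hd y)) \<and> pi_sig s y ! t = (hd y, Suc t))"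
  using assms
proof (induction y arbitrary: t)
  case Nil then show ?case by simp
next
  case (Cons b y)
  show ?case
  proof (cases "t < length (s b)")
    case True
    then show ?thesis by (simp add: nth_append)
  next
    case False
    have Lb: "length (s b) > 0" using Cons.prems by simp
    have "t - length (s b) < length (pi_sig s y)" using Cons.prems(2) False by simp
    then have "snd (pi_sig s y ! (t - length (s b))) \<le> Suc (t - length (s b))"
      using Cons.IH Cons.prems(1) by simp
    have lt: "Suc (t - length (s b)) < Suc t" using False Lb by linarith
    have e: "pi_sig s (b # y) ! t = pi_sig s y ! (t - length (s b))" using False by (simp add: nth_append)
    show ?thesis unfolding e using lt \<open>snd (pi_sig s y ! (t - length (s b))) \<le> Suc (t - length (s b))\<close> by linarith
  qed
qed

lemma prefix_iff_take: "(length h \<le> length x \<and> take (length h) x = h) \<longleftrightarrow> (\<exists>z. x = h @ z)"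
  by (metis append_eq_conv_conj append_take_drop_id le_add1 length_append)

lemma prefix_from_take:
  assumes "\<forall>a\<in>set y. s a \<noteq> []" "\<forall>a\<in>set x. s a \<noteq> []" "x \<noteq> []"
    "length (pi_sig s (butlast x)) < r" "r \<le> length (pi_sig s x)"
    "take r (pi_sig s y) = take r (pi_sig s x)"
  shows "\<exists>z. y = x @ z"
  using assms
proof (induction x arbitrary: y r)
  case Nil then show ?case by simp
next
  case (Cons a x)
  have La: "length (s a) > 0" using Cons.prems by simp
  have r0: "r > 0" using Cons.prems(4) by simp
  obtain b y' where y: "y = b # y'"
  proof (cases y)
    case Nil
    then have "take r (pi_sig s (a # x)) = []" using Cons.prems(6) by simp
    then show ?thesis using r0 La by simp
  next
    case (Cons b y') then show ?thesis using that by blast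
  qed
  have Lb: "length (s b) > 0" using Cons.prems y by simp
  have "take r (pi_sig s y) ! 0 = take r (pi_sig s (a # x)) ! 0" using Cons.prems(6) by simp
  then have "pi_sig s y ! 0 = pi_sig s (a # x) ! 0" using r0 La Lb y by (simp add: nth_append)
  then have ba: "b = a" using La Lb y by (simp add: nth_append)
  show ?case
  proof (cases "x = []")
    case True then show ?thesis using y ba by simp
  next
    case False
    have bl: "butlast (a # x) = a # butlast x" using False by simp
    have r1: "length (s a) + length (pi_sig s (butlast x)) < r" using Cons.prems(4) bl by simp
    have "take r (blk s a @ pi_sig s y') = take r (blk s a @ pi_sig s x)"
      using Cons.prems(6) y ba by simp
    then have "blk s a @ take (r - length (s a)) (pi_sig s y') = blk s a @ take (r - length (s a)) (pi_sig s x)"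
      using r1 by (simp add: take_append)
    then have t: "take (r - length (s a)) (pi_sig s y') = take (r - length (s a)) (pi_sig s x)" by simp
    have "\<exists>z. y' = x @ z"
      by (rule Cons.IH[OF _ _ False _ _ t]) (use Cons.prems y r1 in auto)
    then show ?thesis using y ba by simp
  qed
qed

definition fits :: "'a set \<Rightarrow> ('a \<Rightarrow> 'b list) \<Rightarrow> ('a \<times> nat) list \<Rightarrow> 'a list \<Rightarrow> nat \<Rightarrow> bool" where
  "fits A' s w h off \<longleftrightarrow> h \<in> lists A' \<and> h \<noteq> [] \<and> off < length (s (hd h)) \<and>
     length (pi_sig s (butlast h)) < off + length w \<and> off + length w \<le> length (pi_sig s h) \<and>
     take (length w) (drop off (pi_sig s h)) = w"

lemma take_drop_nth0:
  assumes "take n (drop i xs) = w" "w \<noteq> []"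
  shows "w ! 0 = xs ! i"
proof -
  have "n > 0" "i < length xs" using assms by auto
  then show ?thesis using assms(1)[symmetric] by simp
qed

lemma fits_hd:
  assumes "fits A' s w h off" "w \<noteq> []"
  shows "w ! 0 = (hd h, Suc off)"
proof -
  obtain c h' where h: "h = c # h'" using assms unfolding fits_def by (cases h) auto
  have "w ! 0 = pi_sig s h ! off" using assms unfolding fits_def by (intro take_drop_nth0) auto
  also have "\<dots> = (c, Suc off)" using assms h unfolding fits_def by (simp add: nth_append)
  finally show ?thesis using h by simp
qed

lemma K0:
  assumes ne: "\<forall>a\<in>A'. s a \<noteq> []" and f: "fits A' s w h off" and w: "w \<noteq> []" and y: "y \<in> lists A'"
  shows "(off + length w \<le> length (pi_sig s y) \<and> take (length w) (drop off (pi_sig s y)) = w) \<longleftrightarrow> (\<exists>z. y = h @ z)"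
proof
  assume "\<exists>z. y = h @ z"
  then obtain z where z: "y = h @ z" by blast
  have "off \<le> length (pi_sig s h)" "off + length w \<le> length (pi_sig s h)" using f unfolding fits_def by auto
  then show "off + length w \<le> length (pi_sig s y) \<and> take (length w) (drop off (pi_sig s y)) = w"
    using f z unfolding fits_def by simp
next
  assume a: "off + length w \<le> length (pi_sig s y) \<and> take (length w) (drop off (pi_sig s y)) = w"
  have hA: "h \<in> lists A'" "h \<noteq> []" "off < length (s (hd h))" using f unfolding fits_def by auto
  have oy: "off < length (pi_sig s y)" using a w by (cases w) auto
  have "w ! 0 = pi_sig s y ! off" using a w by (intro take_drop_nth0) auto
  then have py: "pi_sig s y ! off = (hd h, Suc off)" using fits_hd[OF f w] by simp
  have neY: "\<forall>a\<in>set y. s a \<noteq> []" using ne y by auto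
  have "y \<noteq> [] \<and> off < length (s (hd y)) \<and> pi_sig s y ! off = (hd y, Suc off)"
    using pi_nth_snd[OF neY oy] py by simp
  then have yh: "hd y = hd h" "y \<noteq> []" using py by auto
  obtain c h' where h: "h = c # h'" using hA by (cases h) auto
  obtain c' y' where y': "y = c' # y'" using yh by (cases y) auto
  have cc: "c' = c" using yh h y' by simp
  have "take off (pi_sig s y) = take off (pi_sig s h)"
    using y' h cc hA by (simp add: take_append)
  then have "take (off + length w) (pi_sig s y) = take (off + length w) (pi_sig s h)"
    using a f unfolding fits_def by (simp add: take_add)
  then show "\<exists>z. y = h @ z"
    using prefix_from_take[of y s h "off + length w"] neY ne hA f unfolding fits_def by auto
qed

lemma occ_Cons_single:
  assumes "h \<noteq> []"
  shows "occ (a # u) h = (if \<exists>z. a # u = h @ z then 1 else 0) + occ u h"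
proof -
  have "{i. i < length [a] \<and> i + length h \<le> length ([a] @ u) \<and> take (length h) (drop i ([a] @ u)) = h}
      = (if \<exists>z. a # u = h @ z then {0} else {})"
    using prefix_iff_take[of h "a # u"] by auto
  then show ?thesis using occ_append[of "[a]" u h] by simp
qed

lemma occ_pi:
  assumes ne: "\<forall>a\<in>A'. s a \<noteq> []" and f: "fits A' s w h off" and w: "w \<noteq> []"
  shows "u \<in> lists A' \<Longrightarrow> occ (pi_sig s u) w = occ u h"
proof (induction u)
  case Nil
  have "h \<noteq> []" using f unfolding fits_def by auto
  then show ?case using w by (simp add: occ_Nil)
next
  case (Cons a u)
  have hne: "h \<noteq> []" "off < length (s (hd h))" using f unfolding fits_def by auto
  let ?Y = "blk s a @ pi_sig s u"
  let ?X = "{i. i < length (blk s a) \<and> i + length w \<le> length (blk s a @ pi_sig s u) \<and>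
         take (length w) (drop i (blk s a @ pi_sig s u)) = w}"
  have X: "?X = (if \<exists>z. a # u = h @ z then {off} else {})"
  proof -
    have sub: "?X \<subseteq> {off}"
    proof
      fix i assume i: "i \<in> ?X"
      then have "w ! 0 = ?Y ! i" using w by (intro take_drop_nth0) auto
      also have "\<dots> = (a, Suc i)" using i by (simp add: nth_append)
      finally show "i \<in> {off}" using fits_hd[OF f w] by simp
    qed
    have iff: "off \<in> ?X \<longleftrightarrow> (\<exists>z. a # u = h @ z)"
    proof
      assume oX: "off \<in> ?X"
      have "off + length w \<le> length (pi_sig s (a # u)) \<and> take (length w) (drop off (pi_sig s (a # u))) = w"
        unfolding pi_Cons using oX by blast
      then show "\<exists>z. a # u = h @ z" using K0[OF ne f w Cons.prems] by blast
    next
      assume e: "\<exists>z. a # u = h @ z"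
      then have "hd h = a" using hne by (cases h) auto
      then have oa: "off < length (s a)" using hne by simp
      have "off + length w \<le> length (pi_sig s (a # u)) \<and> take (length w) (drop off (pi_sig s (a # u))) = w"
        using K0[OF ne f w Cons.prems] e by blast
      then show "off \<in> ?X" using oa unfolding pi_Cons length_map length_upt by simp
    qed
    show ?thesis using sub iff by auto
  qed
  have "occ (pi_sig s (a # u)) w = card ?X + occ (pi_sig s u) w"
    using occ_append[of "blk s a" "pi_sig s u" w] by simp
  also have "\<dots> = (if \<exists>z. a # u = h @ z then 1 else 0) + occ u h"
    using X Cons by simp
  also have "\<dots> = occ (a # u) h" using occ_Cons_single[OF hne(1)] by simp
  finally show ?case .
qed


declare upt_Suc[simp del]

lemma fits_exists:
  assumes ne: "\<forall>a\<in>A'. s a \<noteq> []" and w: "w \<noteq> []"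
    and val: "\<exists>u\<in>lists A'. is_factor w (pi_sig s u)"
  shows "\<exists>off. fits A' s w (hat A' s w) off \<and> hat A' s w \<noteq> []"
proof -
  let ?P = "\<lambda>n. \<exists>u\<in>lists A'. is_factor w (pi_sig s u) \<and> length u = n"
  define n where "n = (LEAST n. ?P n)"
  have ex: "\<exists>n. ?P n" using val by blast
  have Pn: "?P n" unfolding n_def by (rule LeastI_ex[OF ex])
  have minl: "\<And>u'. u' \<in> lists A' \<Longrightarrow> is_factor w (pi_sig s u') \<Longrightarrow> n \<le> length u'"
    unfolding n_def by (rule Least_le) auto
  obtain h where h: "h \<in> lists A'" "is_factor w (pi_sig s h)" "length h = n" using Pn by blast
  obtain p q where pq: "pi_sig s h = p @ w @ q" using h unfolding is_factor_def by blast
  have hne: "h \<noteq> []" using pq w by auto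
  obtain a h1 where a: "h = a # h1" using hne by (cases h) auto
  have pa: "length p < length (s a)"
  proof (rule ccontr)
    assume "\<not> length p < length (s a)"
    then have le: "length (s a) \<le> length p" by simp
    have "drop (length (s a)) (pi_sig s h) = pi_sig s h1" using a by simp
    also have "drop (length (s a)) (pi_sig s h) = drop (length (s a)) p @ w @ q" using pq le by simp
    finally have eq1: "drop (length (s a)) p @ w @ q = pi_sig s h1" .
    have "is_factor w (pi_sig s h1)" unfolding is_factor_def using eq1[symmetric] by blast
    then have "n \<le> length h1" using minl h a by auto
    then show False using h a by simp
  qed
  obtain h2 b where b: "h = h2 @ [b]" using hne by (cases h rule: rev_cases) auto
  have qb: "length q < length (s b)"
  proof (rule ccontr)
    assume "\<not> length q < length (s b)"
    then have le: "length (s b) \<le> length q" by simp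
    have "pi_sig s h = pi_sig s h2 @ blk s b" using b by simp
    then have "take (length (pi_sig s h2)) (pi_sig s h) = pi_sig s h2" by simp
    moreover have "length (pi_sig s h2) = length p + length w + (length q - length (s b))"
    proof -
      have "length (pi_sig s h2) + length (s b) = length p + length w + length q"
        using arg_cong[OF pq, of length] b by simp
      then show ?thesis using le by linarith
    qed
    ultimately have "pi_sig s h2 = p @ w @ take (length q - length (s b)) q"
      using pq by simp
    then have "is_factor w (pi_sig s h2)" unfolding is_factor_def by blast
    then have "n \<le> length h2" using minl h b by auto
    then show False using h b by simp
  qed
  have f: "fits A' s w h (length p)"
    unfolding fits_def
  proof (intro conjI)
    show "h \<in> lists A'" "h \<noteq> []" by fact+
    show "length p < length (s (hd h))" using pa a by simp
    have "length (pi_sig s h) = length (pi_sig s (butlast h)) + length (s b)" using b by simp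
    then show "length (pi_sig s (butlast h)) < length p + length w"
      using arg_cong[OF pq, of length] qb by simp
    show "length p + length w \<le> length (pi_sig s h)" using arg_cong[OF pq, of length] by simp
    show "take (length w) (drop (length p) (pi_sig s h)) = w" using pq by simp
  qed
  have "hat A' s w = h"
    unfolding hat_def
  proof (rule the_equality)
    show "h \<in> lists A' \<and> is_factor w (pi_sig s h) \<and>
        (\<forall>u'\<in>lists A'. is_factor w (pi_sig s u') \<longrightarrow> length h \<le> length u')"
      using h minl by auto
  next
    fix x assume x: "x \<in> lists A' \<and> is_factor w (pi_sig s x) \<and>
        (\<forall>u'\<in>lists A'. is_factor w (pi_sig s u') \<longrightarrow> length x \<le> length u')"
    have "0 < occ (pi_sig s x) w" using x occ_pos_iff by blast
    then have "0 < occ x h" using occ_pi[OF ne f w] x by simp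
    then obtain p' q' where "x = p' @ h @ q'" using occ_pos_iff unfolding is_factor_def by blast
    moreover have "length x \<le> length h" using x h by auto
    ultimately show "x = h" by simp
  qed
  then show ?thesis using f hne by auto
qed

lemma occ_pi_hat:
  assumes ne: "\<forall>a\<in>A'. s a \<noteq> []" and w: "w \<noteq> []" and u: "u \<in> lists A'"
  shows "occ (pi_sig s u) w = (if \<exists>u'\<in>lists A'. is_factor w (pi_sig s u') then occ u (hat A' s w) else 0)"
proof (cases "\<exists>u'\<in>lists A'. is_factor w (pi_sig s u')")
  case True
  then obtain off where "fits A' s w (hat A' s w) off" using fits_exists[OF ne w] by blast
  then show ?thesis using occ_pi[OF ne _ w u] True by simp
next
  case False
  then have "\<not> is_factor w (pi_sig s u)" using u by blast
  then show ?thesis using False occ_pos_iff by (metis neq0_conv)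
qed

lemma occ_map:
  assumes "set p \<subseteq> B" "finite B"
  shows "occ (map f p) w' = (\<Sum>w \<in> {w. w \<in> lists B \<and> map f w = w'}. occ p w)"
proof -
  let ?W = "{w. w \<in> lists B \<and> map f w = w'}"
  let ?Pos = "\<lambda>w. {i. i + length w \<le> length p \<and> take (length w) (drop i p) = w}"
  have finW: "finite ?W"
    by (rule finite_subset[OF _ finite_lists_length_eq[OF assms(2), of "length w'"]]) auto
  have eq: "{i. i + length w' \<le> length (map f p) \<and> take (length w') (drop i (map f p)) = w'} = (\<Union>w\<in>?W. ?Pos w)"
  proof (rule set_eqI, rule iffI)
    fix i assume i: "i \<in> {i. i + length w' \<le> length (map f p) \<and> take (length w') (drop i (map f p)) = w'}"
    let ?w = "take (length w') (drop i p)"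
    have "set ?w \<subseteq> B" using assms(1) by (meson in_set_dropD in_set_takeD subset_iff)
    moreover have "map f ?w = w'" using i by (simp add: take_map drop_map)
    moreover have "length ?w = length w'"
    proof -
      have "i + length w' \<le> length p" using i by simp
      then show ?thesis by simp
    qed
    ultimately show "i \<in> (\<Union>w\<in>?W. ?Pos w)" using i by auto
  next
    fix i assume "i \<in> (\<Union>w\<in>?W. ?Pos w)"
    then obtain w where w: "w \<in> ?W" "i \<in> ?Pos w" by blast
    have "length w = length w'" using w by auto
    then show "i \<in> {i. i + length w' \<le> length (map f p) \<and> take (length w') (drop i (map f p)) = w'}"
      using w by (auto simp: take_map drop_map)
  qed
  have "occ (map f p) w' = card (\<Union>w\<in>?W. ?Pos w)" unfolding occ_def eq ..
  also have "\<dots> = (\<Sum>w\<in>?W. card (?Pos w))"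
  proof (rule card_UN_disjoint[OF finW])
    show "\<forall>w\<in>?W. finite (?Pos w)" using occ_set_finite by auto
    show "\<forall>w1\<in>?W. \<forall>w2\<in>?W. w1 \<noteq> w2 \<longrightarrow> ?Pos w1 \<inter> ?Pos w2 = {}"
    proof (intro ballI impI)
      fix w1 w2 assume "w1 \<in> ?W" "w2 \<in> ?W" "w1 \<noteq> w2"
      then have "length w1 = length w2" by (metis (mono_tags, lifting) length_map mem_Collect_eq)
      then show "?Pos w1 \<inter> ?Pos w2 = {}" using \<open>w1 \<noteq> w2\<close> by auto
    qed
  qed
  finally show ?thesis unfolding occ_def .
qed

lemma map_nth_minus1: "map (\<lambda>i. xs ! (i - 1)) [1..<Suc (length xs)] = xs"
  by (rule nth_equalityI) auto

lemma subst_eq_map: "subst s u = map (alpha_sig s) (pi_sig s u)"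
proof (induction u)
  case Nil then show ?case by simp
next
  case (Cons a u)
  have "map (alpha_sig s) (blk s a) = s a"
    using map_nth_minus1[of "s a"] by (simp add: alpha_sig_def comp_def)
  then show ?case using Cons by simp
qed

lemma pi_lists: "u \<in> lists A' \<Longrightarrow> set (pi_sig s u) \<subseteq> sub_alph A' s"
  by (induction u) (auto simp: sub_alph_def)

lemma sub_alph_finite: "finite A' \<Longrightarrow> finite (sub_alph A' s)"
proof -
  assume "finite A'"
  have "sub_alph A' s = (\<Union>a\<in>A'. (\<lambda>i. (a, i)) ` {1..length (s a)})"
    unfolding sub_alph_def by auto
  then show ?thesis using \<open>finite A'\<close> by simp
qed


theorem lemma5p2:
  fixes A :: "nat \<Rightarrow> 'a set" and sig :: "nat \<Rightarrow> 'a \<Rightarrow> 'a list" and v :: "nat \<Rightarrow> 'a \<Rightarrow> real"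
  assumes "directive_seq A sig"
    and "everywhere_growing A sig"
    and "vector_tower A sig v"
  shows "\<forall>k. \<forall>w' \<in> lists (A k). w' \<noteq> [] \<longrightarrow>
           measure_transfer (A (Suc k)) (sig k) (eval_tower A sig v (Suc k)) w'
             = eval_tower A sig v k w'"
proof (intro allI ballI impI)
  fix k w' assume w'A: "w' \<in> lists (A k)" and w'ne: "w' \<noteq> []"
  note ds = assms(1) and vt = assms(3)
  define W where "W = {w. w \<in> lists (sub_alph (A (Suc k)) (sig k)) \<and> map (alpha_sig (sig k)) w = w'}"
  define valid where "valid = (\<lambda>w. \<exists>u\<in>lists (A (Suc k)). is_factor w (pi_sig (sig k) u))"
  have ne: "\<forall>a\<in>A (Suc k). sig k a \<noteq> []" using ds unfolding directive_seq_def by blast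
  have finA: "finite (A (Suc k))" using ds unfolding directive_seq_def by blast
  have finB: "finite (sub_alph (A (Suc k)) (sig k))" using sub_alph_finite[OF finA] .
  have finW: "finite W" unfolding W_def
    by (rule finite_subset[OF _ finite_lists_length_eq[OF finB, of "length w'"]]) auto
  have wne: "\<And>w. w \<in> W \<Longrightarrow> w \<noteq> []" using w'ne unfolding W_def by auto
  have key: "occ (sig_range sig k (Suc m) [a]) w' =
      (\<Sum>w\<in>W. if valid w then occ (sig_range sig (Suc k) m [a]) (hat (A (Suc k)) (sig k) w) else 0)"
    if a: "a \<in> A (Suc k + m)" for m a
  proof -
    let ?u = "sig_range sig (Suc k) m [a]"
    have u: "?u \<in> lists (A (Suc k))" using sig_range_lists[OF ds, of "[a]" "Suc k" m] a by auto
    have "occ (sig_range sig k (Suc m) [a]) w' = occ (map (alpha_sig (sig k)) (pi_sig (sig k) ?u)) w'"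
      by (simp only: sig_range.simps subst_eq_map)
    also have "\<dots> = (\<Sum>w\<in>W. occ (pi_sig (sig k) ?u) w)"
      unfolding W_def by (rule occ_map[OF pi_lists[OF u] finB])
    also have "\<dots> = (\<Sum>w\<in>W. if valid w then occ ?u (hat (A (Suc k)) (sig k) w) else 0)"
      by (rule sum.cong[OF refl]) (simp add: occ_pi_hat[OF ne wne u] valid_def)
    finally show ?thesis .
  qed
  have Seq: "Ssum A sig v k w' (Suc m) =
      (\<Sum>w\<in>W. if valid w then Ssum A sig v (Suc k) (hat (A (Suc k)) (sig k) w) m else 0)" for m
  proof -
    have "Ssum A sig v k w' (Suc m) = (\<Sum>a\<in>A (Suc k + m). v (Suc k + m) a *
        real (\<Sum>w\<in>W. if valid w then occ (sig_range sig (Suc k) m [a]) (hat (A (Suc k)) (sig k) w) else 0))"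
    proof -
      have e: "k + Suc m = Suc k + m" by simp
      show ?thesis unfolding Ssum_def e by (rule sum.cong[OF refl]) (simp only: key)
    qed
    also have "\<dots> = (\<Sum>a\<in>A (Suc k + m). \<Sum>w\<in>W. v (Suc k + m) a *
        real (if valid w then occ (sig_range sig (Suc k) m [a]) (hat (A (Suc k)) (sig k) w) else 0))"
      by (simp only: of_nat_sum sum_distrib_left)
    also have "\<dots> = (\<Sum>w\<in>W. \<Sum>a\<in>A (Suc k + m). v (Suc k + m) a *
        real (if valid w then occ (sig_range sig (Suc k) m [a]) (hat (A (Suc k)) (sig k) w) else 0))"
      by (rule sum.swap)
    also have "\<dots> = (\<Sum>w\<in>W. if valid w then Ssum A sig v (Suc k) (hat (A (Suc k)) (sig k) w) m else 0)"
      unfolding Ssum_def by (rule sum.cong[OF refl]) auto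
    finally show ?thesis .
  qed
  define L where "L = (\<Sum>w\<in>W. if valid w then lim (Ssum A sig v (Suc k) (hat (A (Suc k)) (sig k) w)) else 0)"
  have "(\<lambda>m. \<Sum>w\<in>W. if valid w then Ssum A sig v (Suc k) (hat (A (Suc k)) (sig k) w) m else 0) \<longlonglongrightarrow> L"
    unfolding L_def
  proof (rule tendsto_sum)
    fix w assume "w \<in> W"
    show "(\<lambda>m. if valid w then Ssum A sig v (Suc k) (hat (A (Suc k)) (sig k) w) m else 0) \<longlonglongrightarrow>
        (if valid w then lim (Ssum A sig v (Suc k) (hat (A (Suc k)) (sig k) w)) else 0)"
    proof (cases "valid w")
      case True
      then have "hat (A (Suc k)) (sig k) w \<noteq> []"
        using fits_exists[OF ne wne[OF \<open>w \<in> W\<close>]] unfolding valid_def by blast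
      then show ?thesis using True Ssum_conv[OF ds vt] by simp
    qed simp
  qed
  then have "(\<lambda>m. Ssum A sig v k w' (Suc m)) \<longlonglongrightarrow> L" unfolding Seq .
  then have "Ssum A sig v k w' \<longlonglongrightarrow> L" by (rule LIMSEQ_imp_Suc)
  then have ev: "eval_tower A sig v k w' = L" unfolding eval_tower_Ssum by (rule limI)
  have "measure_transfer (A (Suc k)) (sig k) (eval_tower A sig v (Suc k)) w' = L"
    unfolding measure_transfer_def L_def W_def[symmetric]
    by (rule sum.cong[OF refl]) (simp add: hat_val_def valid_def eval_tower_Ssum)
  then show "measure_transfer (A (Suc k)) (sig k) (eval_tower A sig v (Suc k)) w' = eval_tower A sig v k w'"
    using ev by simp
qed

end
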